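(* Let $f\in\mathbb{R}[X_1,\dots,X_n]$ be a non-constant polynomial of degree $2d$ with $f_{2d,i}>0$ for $i=1,\dots,n$. Then $f_{gp}=f_0-m^*$, where $m^*$ is the optimal value of the optimization problem $$\text{Minimize } \sum_{\alpha\in\Delta^{<2d}}(2d-|\alpha|)\left[\left(\frac{f_{\alpha}}{2d}\right)^{2d}\alpha^{\alpha}a_{\alpha}^{-\alpha}\right]^{\frac{1}{2d-|\alpha|}}$$ $$\text{subject to } \sum_{\alpha\in\Delta}\frac{a_{\alpha,i}}{f_{2d,i}}\le 1,\ i=1,\dots,n,\quad\text{and}\quad \frac{(2d)^{2d}a_{\alpha}^{\alpha}}{|f_{\alpha}|^{2d}\alpha^{\alpha}}=1,\ \alpha\in\Delta,\ |\alpha|=2d,$$ in the positive variables $a_{\alpha,i}$, $\alpha\in\Delta$, $i=1,\dots,n$, $\alpha_i\neq0$ (with $a_{\alpha,i}:=0$ when $\alpha_i=0$, and $a_\alpha=(a_{\alpha,1},\dots,a_{\alpha,n})$). Moreover this problem is a geometric program: the objective and the inequality-constraint functions are posynomials, and the equality-constraint functions are monomial functions, in these variables.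
   Context: $\mathbb{N}=\{0,1,2,\dots\}$. For $\alpha\in\mathbb{N}^n$ write $\underline{X}^\alpha=X_1^{\alpha_1}\cdots X_n^{\alpha_n}$, $|\alpha|=\sum_i\alpha_i$, and for $a\in\mathbb{R}^n$, $a^{\alpha}=\prod_i a_i^{\alpha_i}$ with $0^0=1$ ($a_\alpha^{-\alpha}$ means $1/a_\alpha^\alpha$). For $f=\sum_\alpha f_\alpha\underline{X}^\alpha$ of degree $2d$: $f_0$ constant term, $f_{2d,i}$ coefficient of $X_i^{2d}$, $\Omega=\{\alpha: f_\alpha\ne0\}\setminus\{\underline{0},2d\epsilon_1,\dots,2d\epsilon_n\}$, $\Delta=\{\alpha\in\Omega:\ f_\alpha<0\text{ or }\alpha_i\text{ odd for some }i\}$, $\Delta^{<2d}=\{\alpha\in\Delta:|\alpha|<2d\}$. $f_{gp}$ is the supremum (with $\sup\emptyset=-\infty$) of all $r\in\mathbb{R}$ for which there exist reals $a_{\alpha,i}\ge0$ ($\alpha\in\Delta$, $i=1,\dots,n$), $a_{\alpha,i}=0$ iff $\alpha_i=0$, with (1) $(2d)^{2d}a_\alpha^\alpha=|f_\alpha|^{2d}\alpha^\alpha$ for $\alpha\in\Delta$, $|\alpha|=2d$; (2) $f_{2d,i}\ge\sum_{\alpha\in\Delta}a_{\alpha,i}$ for all $i$; (3) $f_0-r\ge\sum_{\alpha\in\Delta^{<2d}}(2d-|\alpha|)\big[\frac{|f_\alpha|^{2d}\alpha^\alpha}{(2d)^{2d}a_\alpha^\alpha}\big]^{1/(2d-|\alpha|)}$.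 The optimal value $m^*$ is the infimum of the objective over the feasible set ($+\infty$ if the feasible set is empty). A monomial function on $\mathbb{R}_{>0}^N$ is $c x_1^{b_1}\cdots x_N^{b_N}$ with $c>0$, $b_j\in\mathbb{R}$; a posynomial is a finite sum of monomial functions. *)

theory Defs
  imports "HOL-Analysis.Analysis"
begin

text \<open>Polynomials in the variables X_i, i ranging over the finite type 'n (so n = CARD('n)),
  are represented by their coefficient functions on exponent vectors alpha :: 'n => nat,
  required to have finite support.\<close>

definition mdeg :: "('n::finite \<Rightarrow> nat) \<Rightarrow> nat" where
  "mdeg \<alpha> = (\<Sum>i\<in>UNIV. \<alpha> i)"

definition mpoly_degree :: "(('n::finite \<Rightarrow> nat) \<Rightarrow> real) \<Rightarrow> nat" where
  "mpoly_degree f = (if {\<alpha>. f \<alpha> \<noteq> 0} = {} then 0 else Max (mdeg ` {\<alpha>. f \<alpha> \<noteq> 0}))"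

definition sepsv :: "nat \<Rightarrow> 'n \<Rightarrow> 'n \<Rightarrow> nat" where
  "sepsv k i = (\<lambda>j. if j = i then k else 0)"

text \<open>a^alpha = prod_i a_i^alpha_i (with 0^0 = 1).\<close>
definition mpow :: "('n::finite \<Rightarrow> real) \<Rightarrow> ('n \<Rightarrow> nat) \<Rightarrow> real" where
  "mpow a \<alpha> = (\<Prod>i\<in>UNIV. a i ^ \<alpha> i)"

definition Omega :: "(('n::finite \<Rightarrow> nat) \<Rightarrow> real) \<Rightarrow> nat \<Rightarrow> ('n \<Rightarrow> nat) set" where
  "Omega f d = {\<alpha>. f \<alpha> \<noteq> 0} - ({\<lambda>_. 0} \<union> range (sepsv (2*d)))"

definition Delta :: "(('n::finite \<Rightarrow> nat) \<Rightarrow> real) \<Rightarrow> nat \<Rightarrow> ('n \<Rightarrow> nat) set" where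
  "Delta f d = {\<alpha> \<in> Omega f d. f \<alpha> < 0 \<or> (\<exists>i. odd (\<alpha> i))}"

definition Delta_lt :: "(('n::finite \<Rightarrow> nat) \<Rightarrow> real) \<Rightarrow> nat \<Rightarrow> ('n \<Rightarrow> nat) set" where
  "Delta_lt f d = {\<alpha> \<in> Delta f d. mdeg \<alpha> < 2*d}"

definition fgp_feasible ::
  "(('n::finite \<Rightarrow> nat) \<Rightarrow> real) \<Rightarrow> nat \<Rightarrow> real \<Rightarrow> (('n \<Rightarrow> nat) \<Rightarrow> 'n \<Rightarrow> real) \<Rightarrow> bool" where
  "fgp_feasible f d r a \<longleftrightarrow>
     (\<forall>\<alpha>\<in>Delta f d. \<forall>i. a \<alpha> i \<ge> 0 \<and> (a \<alpha> i = 0 \<longleftrightarrow> \<alpha> i = 0)) \<and>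
     (\<forall>\<alpha>\<in>Delta f d. mdeg \<alpha> = 2*d \<longrightarrow>
        real (2*d) ^ (2*d) * mpow (a \<alpha>) \<alpha> = \<bar>f \<alpha>\<bar> ^ (2*d) * mpow (\<lambda>i. real (\<alpha> i)) \<alpha>) \<and>
     (\<forall>i. f (sepsv (2*d) i) \<ge> (\<Sum>\<alpha>\<in>Delta f d. a \<alpha> i)) \<and>
     f (\<lambda>_. 0) - r \<ge> (\<Sum>\<alpha>\<in>Delta_lt f d. real (2*d - mdeg \<alpha>) *
        ((\<bar>f \<alpha>\<bar> ^ (2*d) * mpow (\<lambda>i. real (\<alpha> i)) \<alpha>) / (real (2*d) ^ (2*d) * mpow (a \<alpha>) \<alpha>))
          powr (1 / real (2*d - mdeg \<alpha>)))"

text \<open>f_gp as an extended real; Sup of the empty set is -infinity.\<close>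
definition f_gp :: "(('n::finite \<Rightarrow> nat) \<Rightarrow> real) \<Rightarrow> nat \<Rightarrow> ereal" where
  "f_gp f d = Sup {ereal r | r. \<exists>a. fgp_feasible f d r a}"

definition gp_vars :: "(('n::finite \<Rightarrow> nat) \<Rightarrow> real) \<Rightarrow> nat \<Rightarrow> (('n \<Rightarrow> nat) \<times> 'n) set" where
  "gp_vars f d = {(\<alpha>, i). \<alpha> \<in> Delta f d \<and> \<alpha> i \<noteq> 0}"

definition gp_a :: "(('n::finite \<Rightarrow> nat) \<Rightarrow> real) \<Rightarrow> nat \<Rightarrow> (('n \<Rightarrow> nat) \<times> 'n \<Rightarrow> real)
    \<Rightarrow> ('n \<Rightarrow> nat) \<Rightarrow> 'n \<Rightarrow> real" where
  "gp_a f d x \<alpha> i = (if (\<alpha>, i) \<in> gp_vars f d then x (\<alpha>, i) else 0)"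

definition gp_objective :: "(('n::finite \<Rightarrow> nat) \<Rightarrow> real) \<Rightarrow> nat \<Rightarrow> (('n \<Rightarrow> nat) \<times> 'n \<Rightarrow> real) \<Rightarrow> real" where
  "gp_objective f d x = (\<Sum>\<alpha>\<in>Delta_lt f d. real (2*d - mdeg \<alpha>) *
      ((f \<alpha> / real (2*d)) ^ (2*d) * mpow (\<lambda>i. real (\<alpha> i)) \<alpha> * inverse (mpow (gp_a f d x \<alpha>) \<alpha>))
        powr (1 / real (2*d - mdeg \<alpha>)))"

definition gp_ineq :: "(('n::finite \<Rightarrow> nat) \<Rightarrow> real) \<Rightarrow> nat \<Rightarrow> 'n \<Rightarrow> (('n \<Rightarrow> nat) \<times> 'n \<Rightarrow> real) \<Rightarrow> real" where
  "gp_ineq f d i x = (\<Sum>\<alpha>\<in>Delta f d. gp_a f d x \<alpha> i / f (sepsv (2*d) i))"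

definition gp_eq :: "(('n::finite \<Rightarrow> nat) \<Rightarrow> real) \<Rightarrow> nat \<Rightarrow> ('n \<Rightarrow> nat) \<Rightarrow> (('n \<Rightarrow> nat) \<times> 'n \<Rightarrow> real) \<Rightarrow> real" where
  "gp_eq f d \<alpha> x = real (2*d) ^ (2*d) * mpow (gp_a f d x \<alpha>) \<alpha> /
                    (\<bar>f \<alpha>\<bar> ^ (2*d) * mpow (\<lambda>i. real (\<alpha> i)) \<alpha>)"

definition gp_feasible :: "(('n::finite \<Rightarrow> nat) \<Rightarrow> real) \<Rightarrow> nat \<Rightarrow> (('n \<Rightarrow> nat) \<times> 'n \<Rightarrow> real) \<Rightarrow> bool" where
  "gp_feasible f d x \<longleftrightarrow>
     (\<forall>v\<in>gp_vars f d. x v > 0) \<and>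
     (\<forall>i. gp_ineq f d i x \<le> 1) \<and>
     (\<forall>\<alpha>\<in>Delta f d. mdeg \<alpha> = 2*d \<longrightarrow> gp_eq f d \<alpha> x = 1)"

text \<open>Optimal value; Inf of the empty set is +infinity.\<close>
definition m_star :: "(('n::finite \<Rightarrow> nat) \<Rightarrow> real) \<Rightarrow> nat \<Rightarrow> ereal" where
  "m_star f d = Inf {ereal (gp_objective f d x) | x. gp_feasible f d x}"

definition monomial_fun :: "'v set \<Rightarrow> (('v \<Rightarrow> real) \<Rightarrow> real) \<Rightarrow> bool" where
  "monomial_fun V g \<longleftrightarrow> (\<exists>c::real. \<exists>b::'v \<Rightarrow> real. c > 0 \<and>
     (\<forall>x. (\<forall>v\<in>V. x v > 0) \<longrightarrow> g x = c * (\<Prod>v\<in>V. x v powr b v)))"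

definition posynomial :: "'v set \<Rightarrow> (('v \<Rightarrow> real) \<Rightarrow> real) \<Rightarrow> bool" where
  "posynomial V g \<longleftrightarrow> (\<exists>m::nat. \<exists>c::nat \<Rightarrow> real. \<exists>b::nat \<Rightarrow> 'v \<Rightarrow> real. (\<forall>k<m. c k > 0) \<and>
     (\<forall>x. (\<forall>v\<in>V. x v > 0) \<longrightarrow> g x = (\<Sum>k<m. c k * (\<Prod>v\<in>V. x v powr b k v))))"

end

theory Submission
  imports Defs
begin

lemma mono_cong:
  assumes "monomial_fun V g" "\<And>x. (\<forall>v\<in>V. x v > 0) \<Longrightarrow> g x = h x"
  shows "monomial_fun V h"
  using assms unfolding monomial_fun_def by metis

lemma mono_pos:
  assumes "monomial_fun V g" "\<forall>v\<in>V. x v > 0"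
  shows "g x > 0"
proof -
  obtain c b where "c > 0" "\<forall>x. (\<forall>v\<in>V. x v > 0) \<longrightarrow> g x = c * (\<Prod>v\<in>V. x v powr b v)"
    using assms(1) unfolding monomial_fun_def by blast
  then show ?thesis using assms(2) by (auto intro!: prod_pos mult_pos_pos)
qed

lemma mono_const:
  assumes "c > 0" shows "monomial_fun V (\<lambda>x. c)"
  unfolding monomial_fun_def
  by (rule exI[of _ c], rule exI[of _ "\<lambda>_. 0"]) (use assms in \<open>auto intro!: prod.neutral\<close>)

lemma mono_var:
  assumes "finite V" "v0 \<in> V" shows "monomial_fun V (\<lambda>x. x v0)"
  unfolding monomial_fun_def
proof (rule exI[of _ 1], rule exI[of _ "\<lambda>v. if v = v0 then 1 else 0"], intro conjI allI impI)
  fix x :: "_ \<Rightarrow> real" assume p: "\<forall>v\<in>V. x v > 0"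
  have "(\<Prod>v\<in>V. x v powr (if v = v0 then 1 else 0)) = (\<Prod>v\<in>V. if v = v0 then x v0 else 1)"
    by (rule prod.cong) (use p in auto)
  also have "\<dots> = x v0" using assms by simp
  finally show "x v0 = 1 * (\<Prod>v\<in>V. x v powr (if v = v0 then 1 else 0))" by simp
qed simp

lemma mono_mult:
  assumes "monomial_fun V g" "monomial_fun V h"
  shows "monomial_fun V (\<lambda>x. g x * h x)"
proof -
  obtain c b where c: "c > 0" "\<forall>x. (\<forall>v\<in>V. x v > 0) \<longrightarrow> g x = c * (\<Prod>v\<in>V. x v powr b v)"
    using assms(1) unfolding monomial_fun_def by blast
  obtain c' b' where c': "c' > 0" "\<forall>x. (\<forall>v\<in>V. x v > 0) \<longrightarrow> h x = c' * (\<Prod>v\<in>V. x v powr b' v)"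
    using assms(2) unfolding monomial_fun_def by blast
  show ?thesis unfolding monomial_fun_def
  proof (rule exI[of _ "c*c'"], rule exI[of _ "\<lambda>v. b v + b' v"], intro conjI allI impI)
    show "c*c' > 0" using c c' by simp
    fix x :: "_ \<Rightarrow> real" assume p: "\<forall>v\<in>V. x v > 0"
    have "(\<Prod>v\<in>V. x v powr (b v + b' v)) = (\<Prod>v\<in>V. x v powr b v * x v powr b' v)"
      by (rule prod.cong) (auto simp: powr_add)
    then show "g x * h x = c * c' * (\<Prod>v\<in>V. x v powr (b v + b' v))"
      using c c' p by (simp add: prod.distrib)
  qed
qed

lemma mono_powr:
  assumes "monomial_fun V g"
  shows "monomial_fun V (\<lambda>x. g x powr p)"
proof -
  obtain c b where c: "c > 0" "\<forall>x. (\<forall>v\<in>V. x v > 0) \<longrightarrow> g x = c * (\<Prod>v\<in>V. x v powr b v)"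
    using assms(1) unfolding monomial_fun_def by blast
  show ?thesis unfolding monomial_fun_def
  proof (rule exI[of _ "c powr p"], rule exI[of _ "\<lambda>v. b v * p"], intro conjI allI impI)
    show "c powr p > 0" using c by simp
    fix x :: "_ \<Rightarrow> real" assume p: "\<forall>v\<in>V. x v > 0"
    have "g x powr p = c powr p * (\<Prod>v\<in>V. x v powr b v) powr p"
      using c p by (simp add: powr_mult prod_nonneg)
    also have "(\<Prod>v\<in>V. x v powr b v) powr p = (\<Prod>v\<in>V. x v powr (b v * p))"
      by (simp add: prod_powr_distrib powr_powr)
    finally show "g x powr p = c powr p * (\<Prod>v\<in>V. x v powr (b v * p))" .
  qed
qed

lemma mono_inverse:
  assumes "monomial_fun V g"
  shows "monomial_fun V (\<lambda>x. inverse (g x))"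
proof -
  have "monomial_fun V (\<lambda>x. g x powr (-1))" by (rule mono_powr[OF assms])
  then show ?thesis
  proof (rule mono_cong)
    fix x :: "_ \<Rightarrow> real" assume "\<forall>v\<in>V. x v > 0"
    then have "g x > 0" by (rule mono_pos[OF assms])
    then show "g x powr (-1) = inverse (g x)" by (simp add: powr_minus)
  qed
qed

lemma mono_power:
  assumes "monomial_fun V g"
  shows "monomial_fun V (\<lambda>x. g x ^ n)"
proof (induction n)
  case 0 then show ?case using mono_const[of 1] by simp
next
  case (Suc n) then show ?case using mono_mult[OF assms Suc] by simp
qed

lemma mono_prod:
  assumes "finite I" "\<forall>i\<in>I. monomial_fun V (g i)"
  shows "monomial_fun V (\<lambda>x. \<Prod>i\<in>I. g i x)"
  using assms
proof (induction I rule: finite_induct)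
  case empty then show ?case using mono_const[of 1] by simp
next
  case (insert a F) then show ?case using mono_mult[of V "g a" "\<lambda>x. \<Prod>i\<in>F. g i x"] by simp
qed

lemma posy_cong:
  assumes "posynomial V g" "\<And>x. (\<forall>v\<in>V. x v > 0) \<Longrightarrow> g x = h x"
  shows "posynomial V h"
  using assms unfolding posynomial_def by metis

lemma posy_zero: "posynomial V (\<lambda>x. 0)"
  unfolding posynomial_def by (rule exI[of _ 0]) simp

lemma posy_mono:
  assumes "monomial_fun V g" shows "posynomial V g"
proof -
  obtain c b where c: "c > 0" "\<forall>x. (\<forall>v\<in>V. x v > 0) \<longrightarrow> g x = c * (\<Prod>v\<in>V. x v powr b v)"
    using assms(1) unfolding monomial_fun_def by blast
  show ?thesis unfolding posynomial_def
    by (rule exI[of _ 1], rule exI[of _ "\<lambda>_. c"], rule exI[of _ "\<lambda>_. b"]) (use c in auto)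
qed

lemma sum_lessThan_split: "(\<Sum>k<m1+m2. f k) = (\<Sum>k<m1. f k) + (\<Sum>k<m2. f (m1+k))"
  for f :: "nat \<Rightarrow> real"
  by (induct m2) auto

lemma posy_add:
  assumes "posynomial V g" "posynomial V h"
  shows "posynomial V (\<lambda>x. g x + h x)"
proof -
  obtain m :: nat and c b where c: "\<forall>k<m. c k > 0" "\<forall>x. (\<forall>v\<in>V. x v > 0) \<longrightarrow> g x = (\<Sum>k<m. c k * (\<Prod>v\<in>V. x v powr b k v))"
    using assms(1) unfolding posynomial_def by auto
  obtain m' :: nat and c' b' where c': "\<forall>k<m'. c' k > 0" "\<forall>x. (\<forall>v\<in>V. x v > 0) \<longrightarrow> h x = (\<Sum>k<m'. c' k * (\<Prod>v\<in>V. x v powr b' k v))"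
    using assms(2) unfolding posynomial_def by auto
  define C where "C = (\<lambda>k. if k < m then c k else c' (k - m))"
  define B where "B = (\<lambda>k. if k < m then b k else b' (k - m))"
  show ?thesis unfolding posynomial_def
  proof (rule exI[of _ "m+m'"], rule exI[of _ C], rule exI[of _ B], intro conjI allI impI)
    fix k assume "k < m + m'" then show "0 < C k" using c c' by (auto simp: C_def)
  next
    fix x :: "_ \<Rightarrow> real" assume p: "\<forall>v\<in>V. x v > 0"
    have "(\<Sum>k<m+m'. C k * (\<Prod>v\<in>V. x v powr B k v)) =
       (\<Sum>k<m. C k * (\<Prod>v\<in>V. x v powr B k v)) + (\<Sum>k<m'. C (m+k) * (\<Prod>v\<in>V. x v powr B (m+k) v))"
      by (rule sum_lessThan_split)
    also have "(\<Sum>k<m. C k * (\<Prod>v\<in>V. x v powr B k v)) = g x"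
      using c p by (simp add: C_def B_def)
    also have "(\<Sum>k<m'. C (m+k) * (\<Prod>v\<in>V. x v powr B (m+k) v)) = h x"
      using c' p by (simp add: C_def B_def)
    finally show "g x + h x = (\<Sum>k<m+m'. C k * (\<Prod>v\<in>V. x v powr B k v))" by simp
  qed
qed

lemma posy_sum:
  assumes "finite I" "\<forall>i\<in>I. posynomial V (g i)"
  shows "posynomial V (\<lambda>x. \<Sum>i\<in>I. g i x)"
  using assms
proof (induction I rule: finite_induct)
  case empty then show ?case using posy_zero by simp
next
  case (insert a F) then show ?case using posy_add[of V "g a" "\<lambda>x. \<Sum>i\<in>F. g i x"] by simp
qed


lemma Delta_sub: "Delta f d \<subseteq> {\<alpha>. f \<alpha> \<noteq> 0}"
  unfolding Delta_def Omega_def by auto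

lemma Delta_lt_sub: "Delta_lt f d \<subseteq> Delta f d"
  unfolding Delta_lt_def by auto

lemma finite_gp_vars:
  fixes f :: "('n::finite \<Rightarrow> nat) \<Rightarrow> real"
  assumes "finite {\<alpha>. f \<alpha> \<noteq> 0}"
  shows "finite (gp_vars f d)"
proof -
  have "gp_vars f d \<subseteq> Delta f d \<times> UNIV" unfolding gp_vars_def by auto
  moreover have "finite (Delta f d \<times> (UNIV :: 'n set))"
    using finite_subset[OF Delta_sub assms] by simp
  ultimately show ?thesis using finite_subset by blast
qed

lemma gp_a_pos:
  assumes "\<alpha> \<in> Delta f d"
  shows "gp_a f d x \<alpha> i = (if \<alpha> i = 0 then 0 else x (\<alpha>, i))"
  using assms unfolding gp_a_def gp_vars_def by auto

lemma mpow_alpha_pos: "mpow (\<lambda>i. real (\<alpha> i)) \<alpha> > 0"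
  unfolding mpow_def
proof (rule prod_pos)
  fix i show "0 < real (\<alpha> i) ^ \<alpha> i" by (cases "\<alpha> i = 0") auto
qed

lemma mpow_monomial:
  fixes f :: "('n::finite \<Rightarrow> nat) \<Rightarrow> real"
  assumes fin: "finite {\<alpha>. f \<alpha> \<noteq> 0}" and a: "\<alpha> \<in> Delta f d"
  shows "monomial_fun (gp_vars f d) (\<lambda>x. mpow (gp_a f d x \<alpha>) \<alpha>)"
proof -
  let ?g = "\<lambda>i x. if \<alpha> i = 0 then 1 else x (\<alpha>, i) ^ \<alpha> i"
  have "monomial_fun (gp_vars f d) (\<lambda>x. \<Prod>i\<in>UNIV. ?g i x)"
  proof (rule mono_prod)
    show "\<forall>i\<in>UNIV. monomial_fun (gp_vars f d) (?g i)"
    proof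
      fix i :: 'n
      show "monomial_fun (gp_vars f d) (?g i)"
      proof (cases "\<alpha> i = 0")
        case True then show ?thesis using mono_const[of 1] by simp
      next
        case False
        then have "(\<alpha>, i) \<in> gp_vars f d" using a unfolding gp_vars_def by auto
        then have "monomial_fun (gp_vars f d) (\<lambda>x. x (\<alpha>, i) ^ \<alpha> i)"
          using mono_power[OF mono_var[OF finite_gp_vars[OF fin]]] by blast
        then show ?thesis using False by simp
      qed
    qed
  qed simp
  then show ?thesis
  proof (rule mono_cong)
    fix x :: "_ \<Rightarrow> real"
    show "(\<Prod>i\<in>UNIV. ?g i x) = mpow (gp_a f d x \<alpha>) \<alpha>"
      unfolding mpow_def by (intro prod.cong refl) (simp add: gp_a_pos[OF a])
  qed
qed

lemma term_eq:
  fixes y c P M :: real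
  assumes "even n"
  shows "(y / c) ^ n * P * inverse M = \<bar>y\<bar> ^ n * P / (c ^ n * M)"
proof -
  have "(y/c)^n = \<bar>y\<bar>^n / c^n" by (simp add: power_divide power_even_abs[OF assms])
  then show ?thesis by (simp add: divide_inverse inverse_mult_distrib)
qed


lemma fa_pos: "\<alpha> \<in> Delta f d \<Longrightarrow> \<bar>f \<alpha>\<bar> > 0"
  using Delta_sub by fastforce

lemma gp_eq_monomial:
  fixes f :: "('n::finite \<Rightarrow> nat) \<Rightarrow> real"
  assumes fin: "finite {\<alpha>. f \<alpha> \<noteq> 0}" and a: "\<alpha> \<in> Delta f d"
  shows "monomial_fun (gp_vars f d) (gp_eq f d \<alpha>)"
proof -
  define K where "K = real (2*d) ^ (2*d) / (\<bar>f \<alpha>\<bar> ^ (2*d) * mpow (\<lambda>i. real (\<alpha> i)) \<alpha>)"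
  have "K > 0" unfolding K_def using fa_pos[OF a] mpow_alpha_pos[of \<alpha>] by (cases "d = 0") auto
  have "monomial_fun (gp_vars f d) (\<lambda>x. K * mpow (gp_a f d x \<alpha>) \<alpha>)"
    by (rule mono_mult[OF mono_const[OF \<open>K > 0\<close>] mpow_monomial[OF fin a]])
  then show ?thesis
    by (rule mono_cong) (simp add: gp_eq_def K_def)
qed

lemma gp_ineq_posy:
  fixes f :: "('n::finite \<Rightarrow> nat) \<Rightarrow> real"
  assumes fin: "finite {\<alpha>. f \<alpha> \<noteq> 0}" and fp: "f (sepsv (2*d) i) > 0"
  shows "posynomial (gp_vars f d) (gp_ineq f d i)"
  unfolding gp_ineq_def
proof (rule posy_sum)
  show "finite (Delta f d)" using finite_subset[OF Delta_sub fin] .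
  show "\<forall>\<alpha>\<in>Delta f d. posynomial (gp_vars f d) (\<lambda>x. gp_a f d x \<alpha> i / f (sepsv (2 * d) i))"
  proof
    fix \<alpha> assume a: "\<alpha> \<in> Delta f d"
    show "posynomial (gp_vars f d) (\<lambda>x. gp_a f d x \<alpha> i / f (sepsv (2 * d) i))"
    proof (cases "\<alpha> i = 0")
      case True
      show ?thesis by (rule posy_cong[OF posy_zero]) (simp add: gp_a_pos[OF a] True)
    next
      case False
      then have v: "(\<alpha>, i) \<in> gp_vars f d" using a unfolding gp_vars_def by auto
      have "monomial_fun (gp_vars f d) (\<lambda>x. x (\<alpha>, i) * inverse (f (sepsv (2 * d) i)))"
        by (rule mono_mult[OF mono_var[OF finite_gp_vars[OF fin] v] mono_const]) (use fp in simp)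
      then have "posynomial (gp_vars f d) (\<lambda>x. x (\<alpha>, i) * inverse (f (sepsv (2 * d) i)))"
        by (rule posy_mono)
      then show ?thesis
        by (rule posy_cong) (simp add: gp_a_pos[OF a] False divide_inverse)
    qed
  qed
qed

lemma gp_obj_posy:
  fixes f :: "('n::finite \<Rightarrow> nat) \<Rightarrow> real"
  assumes fin: "finite {\<alpha>. f \<alpha> \<noteq> 0}" and d: "d > 0"
  shows "posynomial (gp_vars f d) (gp_objective f d)"
proof -
  have eq: "gp_objective f d = (\<lambda>x. \<Sum>\<alpha>\<in>Delta_lt f d. real (2*d - mdeg \<alpha>) *
      ((f \<alpha> / real (2*d)) ^ (2*d) * mpow (\<lambda>i. real (\<alpha> i)) \<alpha> * inverse (mpow (gp_a f d x \<alpha>) \<alpha>))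
        powr (1 / real (2*d - mdeg \<alpha>)))"
    by (rule ext) (simp add: gp_objective_def)
  show ?thesis unfolding eq
  proof (rule posy_sum)
    show "finite (Delta_lt f d)" using finite_subset[OF Delta_lt_sub finite_subset[OF Delta_sub fin]] .
    show "\<forall>\<alpha>\<in>Delta_lt f d. posynomial (gp_vars f d) (\<lambda>x. real (2*d - mdeg \<alpha>) *
      ((f \<alpha> / real (2*d)) ^ (2*d) * mpow (\<lambda>i. real (\<alpha> i)) \<alpha> * inverse (mpow (gp_a f d x \<alpha>) \<alpha>))
        powr (1 / real (2*d - mdeg \<alpha>)))"
    proof
      fix \<alpha> assume al: "\<alpha> \<in> Delta_lt f d"
      then have a: "\<alpha> \<in> Delta f d" and lt: "mdeg \<alpha> < 2*d" unfolding Delta_lt_def by auto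
      define K where "K = (f \<alpha> / real (2*d)) ^ (2*d) * mpow (\<lambda>i. real (\<alpha> i)) \<alpha>"
      have "(f \<alpha> / real (2*d)) ^ (2*d) > 0"
        using fa_pos[OF a] d by (simp add: power_mult)
      then have K: "K > 0" unfolding K_def using mpow_alpha_pos[of \<alpha>] by simp
      have c: "real (2*d - mdeg \<alpha>) > 0" using lt by simp
      have "monomial_fun (gp_vars f d) (\<lambda>x. real (2*d - mdeg \<alpha>) *
          (K * inverse (mpow (gp_a f d x \<alpha>) \<alpha>)) powr (1 / real (2*d - mdeg \<alpha>)))"
        by (rule mono_mult[OF mono_const[OF c] mono_powr[OF mono_mult[OF mono_const[OF K]
              mono_inverse[OF mpow_monomial[OF fin a]]]]])
      then show "posynomial (gp_vars f d) (\<lambda>x. real (2*d - mdeg \<alpha>) *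
      ((f \<alpha> / real (2*d)) ^ (2*d) * mpow (\<lambda>i. real (\<alpha> i)) \<alpha> * inverse (mpow (gp_a f d x \<alpha>) \<alpha>))
        powr (1 / real (2*d - mdeg \<alpha>)))"
        unfolding K_def by (rule posy_mono)
    qed
  qed
qed


definition Sfun :: "(('n::finite \<Rightarrow> nat) \<Rightarrow> real) \<Rightarrow> nat \<Rightarrow> (('n \<Rightarrow> nat) \<Rightarrow> 'n \<Rightarrow> real) \<Rightarrow> real" where
  "Sfun f d a = (\<Sum>\<alpha>\<in>Delta_lt f d. real (2*d - mdeg \<alpha>) *
        ((\<bar>f \<alpha>\<bar> ^ (2*d) * mpow (\<lambda>i. real (\<alpha> i)) \<alpha>) / (real (2*d) ^ (2*d) * mpow (a \<alpha>) \<alpha>))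
          powr (1 / real (2*d - mdeg \<alpha>)))"

lemma obj_eq: "gp_objective f d x = Sfun f d (gp_a f d x)"
  unfolding gp_objective_def Sfun_def
  by (intro sum.cong refl) (simp add: term_eq)

lemma fgp_iff: "fgp_feasible f d r a \<longleftrightarrow>
     (\<forall>\<alpha>\<in>Delta f d. \<forall>i. a \<alpha> i \<ge> 0 \<and> (a \<alpha> i = 0 \<longleftrightarrow> \<alpha> i = 0)) \<and>
     (\<forall>\<alpha>\<in>Delta f d. mdeg \<alpha> = 2*d \<longrightarrow>
        real (2*d) ^ (2*d) * mpow (a \<alpha>) \<alpha> = \<bar>f \<alpha>\<bar> ^ (2*d) * mpow (\<lambda>i. real (\<alpha> i)) \<alpha>) \<and>
     (\<forall>i. f (sepsv (2*d) i) \<ge> (\<Sum>\<alpha>\<in>Delta f d. a \<alpha> i)) \<and>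
     f (\<lambda>_. 0) - r \<ge> Sfun f d a"
  unfolding fgp_feasible_def Sfun_def by simp

lemma Sfun_cong: "(\<And>\<alpha>. \<alpha> \<in> Delta f d \<Longrightarrow> a \<alpha> = b \<alpha>) \<Longrightarrow> Sfun f d a = Sfun f d b"
  unfolding Sfun_def using Delta_lt_sub[of f d] by (intro sum.cong refl) (simp add: subset_iff)

lemma claimA:
  fixes f :: "('n::finite \<Rightarrow> nat) \<Rightarrow> real"
  assumes fp: "\<forall>i. f (sepsv (2*d) i) > 0" and F: "fgp_feasible f d r a"
  shows "gp_feasible f d (\<lambda>(\<alpha>, i). a \<alpha> i) \<and> gp_objective f d (\<lambda>(\<alpha>, i). a \<alpha> i) \<le> f (\<lambda>_. 0) - r"
proof -
  let ?x = "\<lambda>(\<alpha>, i). a \<alpha> i"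
  note F' = F[unfolded fgp_iff]
  have ga: "gp_a f d ?x \<alpha> = a \<alpha>" if "\<alpha> \<in> Delta f d" for \<alpha>
    using F' that by (auto simp: gp_a_pos[OF that])
  have 1: "\<forall>v\<in>gp_vars f d. ?x v > 0"
  proof
    fix v assume "v \<in> gp_vars f d"
    then obtain \<alpha> i where v: "v = (\<alpha>, i)" "\<alpha> \<in> Delta f d" "\<alpha> i \<noteq> 0" unfolding gp_vars_def by auto
    then have "a \<alpha> i \<ge> 0" "a \<alpha> i \<noteq> 0" using F' by auto
    then show "?x v > 0" using v by simp
  qed
  have 2: "gp_ineq f d i ?x \<le> 1" for i
  proof -
    have "gp_ineq f d i ?x = (\<Sum>\<alpha>\<in>Delta f d. a \<alpha> i) / f (sepsv (2*d) i)"
      unfolding gp_ineq_def sum_divide_distrib by (intro sum.cong refl) (simp add: ga)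
    also have "\<dots> \<le> 1" using F' fp by (simp add: pos_divide_le_eq[OF fp[rule_format]])
    finally show ?thesis .
  qed
  have 3: "gp_eq f d \<alpha> ?x = 1" if "\<alpha> \<in> Delta f d" "mdeg \<alpha> = 2*d" for \<alpha>
  proof -
    have ne: "\<bar>f \<alpha>\<bar> ^ (2*d) * mpow (\<lambda>i. real (\<alpha> i)) \<alpha> \<noteq> 0"
      using fa_pos[OF that(1)] mpow_alpha_pos[of \<alpha>] by simp
    show ?thesis unfolding gp_eq_def ga[OF that(1)] using F' that ne by simp
  qed
  have 4: "gp_objective f d ?x = Sfun f d a"
    unfolding obj_eq by (rule Sfun_cong) (simp add: ga)
  show ?thesis using 1 2 3 4 F' unfolding gp_feasible_def by auto
qed

lemma claimB:
  fixes f :: "('n::finite \<Rightarrow> nat) \<Rightarrow> real"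
  assumes fp: "\<forall>i. f (sepsv (2*d) i) > 0" and G: "gp_feasible f d x"
  shows "fgp_feasible f d (f (\<lambda>_. 0) - gp_objective f d x) (gp_a f d x)"
  unfolding fgp_iff
proof (intro conjI ballI allI impI)
  fix \<alpha> i assume a: "\<alpha> \<in> Delta f d"
  have h: "x (\<alpha>, i) > 0" if "\<alpha> i \<noteq> 0"
    using G that a unfolding gp_feasible_def gp_vars_def by auto
  show "gp_a f d x \<alpha> i \<ge> 0"
    using h by (cases "\<alpha> i = 0") (simp_all add: gp_a_pos[OF a] less_imp_le)
  show "gp_a f d x \<alpha> i = 0 \<longleftrightarrow> \<alpha> i = 0"
    using h by (cases "\<alpha> i = 0") (simp_all add: gp_a_pos[OF a] less_imp_neq)
next
  fix \<alpha> assume a: "\<alpha> \<in> Delta f d" and m: "mdeg \<alpha> = 2*d"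
  have ne: "\<bar>f \<alpha>\<bar> ^ (2*d) * mpow (\<lambda>i. real (\<alpha> i)) \<alpha> \<noteq> 0"
    using fa_pos[OF a] mpow_alpha_pos[of \<alpha>] by simp
  have "gp_eq f d \<alpha> x = 1" using G a m unfolding gp_feasible_def by auto
  then show "real (2*d) ^ (2*d) * mpow (gp_a f d x \<alpha>) \<alpha> = \<bar>f \<alpha>\<bar> ^ (2*d) * mpow (\<lambda>i. real (\<alpha> i)) \<alpha>"
    unfolding gp_eq_def using ne by (simp add: divide_eq_1_iff)
next
  fix i
  have "gp_ineq f d i x \<le> 1" using G unfolding gp_feasible_def by auto
  then have "(\<Sum>\<alpha>\<in>Delta f d. gp_a f d x \<alpha> i) / f (sepsv (2*d) i) \<le> 1"
    unfolding gp_ineq_def sum_divide_distrib .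
  then show "(\<Sum>\<alpha>\<in>Delta f d. gp_a f d x \<alpha> i) \<le> f (sepsv (2*d) i)"
    by (simp add: pos_divide_le_eq[OF fp[rule_format]])
next
  show "Sfun f d (gp_a f d x) \<le> f (\<lambda>_. 0) - (f (\<lambda>_. 0) - gp_objective f d x)"
    by (simp add: obj_eq)
qed

lemma fgp_eq:
  fixes f :: "('n::finite \<Rightarrow> nat) \<Rightarrow> real"
  assumes fp: "\<forall>i. f (sepsv (2*d) i) > 0"
  shows "f_gp f d = ereal (f (\<lambda>_. 0)) - m_star f d"
proof -
  let ?FE = "{x. gp_feasible f d x}"
  let ?R = "{ereal r | r. \<exists>a. fgp_feasible f d r a}"
  let ?T = "(\<lambda>x. ereal (f (\<lambda>_. 0)) - ereal (gp_objective f d x)) ` ?FE"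
  have "Sup ?R \<le> Sup ?T"
  proof (rule Sup_mono)
    fix y assume "y \<in> ?R"
    then obtain r a where y: "y = ereal r" "fgp_feasible f d r a" by auto
    from claimA[OF fp y(2)] show "\<exists>b\<in>?T. y \<le> b"
      by (intro bexI[of _ "ereal (f (\<lambda>_. 0)) - ereal (gp_objective f d (\<lambda>(\<alpha>, i). a \<alpha> i))"]) (auto simp: y)
  qed
  moreover have "Sup ?T \<le> Sup ?R"
  proof (rule Sup_mono)
    fix y assume "y \<in> ?T"
    then obtain x where y: "y = ereal (f (\<lambda>_. 0)) - ereal (gp_objective f d x)" "gp_feasible f d x" by auto
    from claimB[OF fp y(2)] show "\<exists>b\<in>?R. y \<le> b"
      by (intro bexI[of _ y]) (auto simp: y)
  qed
  ultimately have e: "f_gp f d = Sup ?T" unfolding f_gp_def by (rule antisym)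
  have ms: "m_star f d = (INF x\<in>?FE. ereal (gp_objective f d x))"
    unfolding m_star_def by (rule arg_cong[where f=Inf]) auto
  show ?thesis
  proof (cases "?FE = {}")
    case True
    then show ?thesis using e ms by (simp add: bot_ereal_def top_ereal_def)
  next
    case False
    show ?thesis unfolding e ms
      by (rule SUP_ereal_minus_right[OF False]) simp
  qed
qed

theorem corollary3p6:
  fixes f :: "('n::finite \<Rightarrow> nat) \<Rightarrow> real" and d :: nat
  assumes "finite {\<alpha>. f \<alpha> \<noteq> 0}"
    and "d > 0"
    and "mpoly_degree f = 2*d"
    and "\<forall>i. f (sepsv (2*d) i) > 0"
  shows "f_gp f d = ereal (f (\<lambda>_. 0)) - m_star f d \<and>
         posynomial (gp_vars f d) (gp_objective f d) \<and>
         (\<forall>i. posynomial (gp_vars f d) (gp_ineq f d i)) \<and>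
         (\<forall>\<alpha>\<in>Delta f d. mdeg \<alpha> = 2*d \<longrightarrow> monomial_fun (gp_vars f d) (gp_eq f d \<alpha>))"
  using fgp_eq[OF assms(4)] gp_obj_posy[OF assms(1,2)] gp_ineq_posy[OF assms(1)] assms(4)
    gp_eq_monomial[OF assms(1)] by blast

end
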